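(* Let $k\in\{1,\dots,n\}$ and let $R$ be a $k$-upper run of an $n$-DPDA. Then $R$ is $(k-1)$-upper if and only if $|\mathrm{top}^k(R(0))|\le|\mathrm{top}^k(R(i))|$ for every $i\in\{0,\dots,|R|\}$ such that $R[i,|R|]$ is $k$-upper.
   Context: Stacks: fix order $n\ge1$, finite stack alphabet $\Gamma$. A $0$-stack is $(\gamma,x)$ with $\gamma\in\Gamma$, $x=(x_n,\dots,x_1)$ a vector of $n$ positive integers (position). For $k\in\{1,\dots,n\}$ a $k$-stack is a finite list $[s_1,\dots,s_m]$ ($m\ge0$) of nonempty $(k-1)$-stacks such that for some $x_n,\dots,x_{k+1}$, every position in $s_i$ has the form $(x_n,\dots,x_{k+1},i,y_{k-1},\dots,y_1)$. The top is at the right; $|s^k|$ is the number of $(k-1)$-stacks in $s^k$; $s^k:s^{k-1}$ appends at the top (right-associative); for $s^r=t^r:t^{r-1}:\dots:t^k$, $\mathrm{top}^k(s^r)=t^k$. Equality of stacks includes positions. For $k<n$, $\mathsf p_{+1}(s^k)$ adds $1$ to the $(n-k)$-th coordinate of all positions. Operations of order $k\ge1$: $\mathsf{pop}^k(s^r:\dots:s^k:s^{k-1})=s^r:\dots:s^k$, defined only if the topmost $k$-stack has at least two $(k-1)$-stacks; $\mathsf{push}^k_\gamma(s^r:\dots:s^0)=s^r:\dots:s^{k+1}:(s^k:\dots:s^0):\mathsf p_{+1}(s^{k-1}:\dots:s^1:(\gamma,x))$ where $s^0=(\gamma',x)$. An $n$-DPDA has transitions determined by state and topmost stack symbol, each either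 $\mathrm{read}(\vec q)$ ($\vec q:A\to Q$ injective; leads to $(\vec q(a),s)$, reading $a$) or $(q,op)$ with $op$ a stack operation of order $\le n$ (leads to $(q,op(s))$ if defined). Configurations are (state, nonempty $n$-stack). A run is a finite sequence $R=c_0,\dots,c_m$ with each $c_i$ a successor of $c_{i-1}$; $R(i)=c_i$, $|R|=m$, $R[i,j]=c_i,\dots,c_j$. $\mathrm{top}^k(c)$ refers to the stack of $c$. History: for a run $R$ and a $0$-stack $s^0$ of $R(|R|)$, $\mathrm{hist}(R,s^0)$ is a $0$-stack of $R(0)$: if $|R|=0$ it is $s^0$; if $R=S\circ T$, $|T|=1$, and the last step is a read or a $\mathsf{pop}$, or a $\mathsf{push}^r_\gamma$ with $s^0$ not in the topmost $(r-1)$-stack of $R(|R|)$, it is $\mathrm{hist}(S,s^0)$; if the last step is $\mathsf{push}^r_\gamma$ and $s^0$ is in the topmost $(r-1)$-stack of $R(|R|)$, it is $\mathrm{hist}(S,t^0)$ with $t^0$ equal to $s^0$ with the $(n-r+1)$-th position coordinate decreased by $1$. For a $k$-stack $s^k$ of $R(|R|)$, $k\ge1$, $\mathrm{hist}(R,s^k)$ is the $k$-stack of $R(0)$ containing $\mathrm{hist}(R,s^0)$ for all $0$-stacks $s^0$ of $s^k$. For $k\in\{0,\dots,n\}$, $R$ is $k$-upper if $\mathrm{hist}(R,\mathrm{top}^k(R(|R|)))=\mathrm{top}^k(R(0))$. *)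

theory Defs
  imports Main
begin

text \<open>A stack is represented as a tree; the position vector
(x_n,...,x_1) of a 0-stack inside an n-stack is exactly its path of (1-based)
indices from the outermost list, so positions are represented by such paths
(lists of length n, leftmost entry = x_n).\<close>

datatype 'g stk = Z 'g | L "'g stk list"

fun children :: "'g stk \<Rightarrow> 'g stk list" where
  "children (L xs) = xs"
| "children (Z _) = []"

primrec wf :: "nat \<Rightarrow> 'g stk \<Rightarrow> bool" where
  "wf 0 s = (case s of Z _ \<Rightarrow> True | L _ \<Rightarrow> False)"
| "wf (Suc d) s = (case s of Z _ \<Rightarrow> False
                    | L xs \<Rightarrow> xs \<noteq> [] \<and> (\<forall>x\<in>set xs. wf d x))"

primrec descend :: "nat \<Rightarrow> 'g stk \<Rightarrow> 'g stk" where
  "descend 0 s = s"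
| "descend (Suc d) s = descend d (last (children s))"

definition topk :: "nat \<Rightarrow> nat \<Rightarrow> 'g stk \<Rightarrow> 'g stk" where
  "topk n k s = descend (n - k) s"

definition topk_len :: "nat \<Rightarrow> nat \<Rightarrow> 'g stk \<Rightarrow> nat" where
  "topk_len n k s = length (children (topk n k s))"

definition topsym :: "nat \<Rightarrow> 'g stk \<Rightarrow> 'g" where
  "topsym n s = (case descend n s of Z g \<Rightarrow> g | L _ \<Rightarrow> undefined)"

text \<open>common position prefix (x_n,...,x_{k+1}) of the topmost k-stack when descending d = n-k levels\<close>
primrec tpath :: "nat \<Rightarrow> 'g stk \<Rightarrow> nat list" where
  "tpath 0 s = []"
| "tpath (Suc d) s = length (children s) # tpath d (last (children s))"

definition topaddr :: "nat \<Rightarrow> nat \<Rightarrow> 'g stk \<Rightarrow> nat list" where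
  "topaddr n k s = tpath (n - k) s"

primrec pos :: "nat \<Rightarrow> 'g stk \<Rightarrow> nat list set" where
  "pos 0 s = {[]}"
| "pos (Suc d) s = {Suc i # p | i p. i < length (children s) \<and> p \<in> pos d (children s ! i)}"

primrec modtop :: "nat \<Rightarrow> ('g stk \<Rightarrow> 'g stk) \<Rightarrow> 'g stk \<Rightarrow> 'g stk" where
  "modtop 0 f s = f s"
| "modtop (Suc d) f s = L (butlast (children s) @ [modtop d f (last (children s))])"

primrec settop :: "nat \<Rightarrow> 'g \<Rightarrow> 'g stk \<Rightarrow> 'g stk" where
  "settop 0 \<gamma> s = Z \<gamma>"
| "settop (Suc d) \<gamma> s = L (butlast (children s) @ [settop d \<gamma> (last (children s))])"

datatype 'g op = Pop nat | Push nat 'g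

fun apply_op :: "nat \<Rightarrow> 'g op \<Rightarrow> 'g stk \<Rightarrow> 'g stk option" where
  "apply_op n (Pop k) s =
     (if 1 \<le> k \<and> k \<le> n \<and> 2 \<le> length (children (topk n k s))
      then Some (modtop (n - k) (\<lambda>t. L (butlast (children t))) s) else None)"
| "apply_op n (Push k \<gamma>) s =
     (if 1 \<le> k \<and> k \<le> n
      then Some (modtop (n - k)
              (\<lambda>t. L (children t @ [settop (k - 1) \<gamma> (last (children t))])) s)
      else None)"

datatype ('q, 'a, 'g) tr = Read "'a \<Rightarrow> 'q" | Op 'q "'g op"

type_synonym ('q, 'a, 'g) dpda = "'q \<Rightarrow> 'g \<Rightarrow> ('q, 'a, 'g) tr option"

definition is_dpda :: "nat \<Rightarrow> ('q, 'a, 'g) dpda \<Rightarrow> bool" where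
  "is_dpda n \<delta> \<longleftrightarrow> (\<forall>q g f. \<delta> q g = Some (Read f) \<longrightarrow> inj f)
      \<and> (\<forall>q g p k. \<delta> q g = Some (Op p (Pop k)) \<longrightarrow> 1 \<le> k \<and> k \<le> n)
      \<and> (\<forall>q g p k \<gamma>. \<delta> q g = Some (Op p (Push k \<gamma>)) \<longrightarrow> 1 \<le> k \<and> k \<le> n)"

type_synonym ('q, 'g) conf = "'q \<times> 'g stk"

definition succ :: "nat \<Rightarrow> ('q, 'a, 'g) dpda \<Rightarrow> ('q, 'g) conf \<Rightarrow> ('q, 'g) conf \<Rightarrow> bool" where
  "succ n \<delta> c c' = (case \<delta> (fst c) (topsym n (snd c)) of
       None \<Rightarrow> False
     | Some (Read f) \<Rightarrow> snd c' = snd c \<and> (\<exists>a. fst c' = f a)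
     | Some (Op p opr) \<Rightarrow> fst c' = p \<and> apply_op n opr (snd c) = Some (snd c'))"

text \<open>A run R = c_0,...,c_m is a nonempty list; |R| = length R - 1, R(i) = R ! i,
  R[i,|R|] = drop i R.\<close>
definition is_run :: "nat \<Rightarrow> ('q, 'a, 'g) dpda \<Rightarrow> ('q, 'g) conf list \<Rightarrow> bool" where
  "is_run n \<delta> R \<longleftrightarrow> R \<noteq> [] \<and> (\<forall>c\<in>set R. wf n (snd c))
      \<and> (\<forall>i. 0 < i \<and> i < length R \<longrightarrow> succ n \<delta> (R ! (i - 1)) (R ! i))"

text \<open>one step of history: position a of a 0-stack of c' (successor of c) to
  the position of the corresponding 0-stack of c\<close>
definition hist_step :: "nat \<Rightarrow> ('q, 'a, 'g) dpda \<Rightarrow> ('q, 'g) conf \<Rightarrow> ('q, 'g) conf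
                          \<Rightarrow> nat list \<Rightarrow> nat list" where
  "hist_step n \<delta> c c' a = (case \<delta> (fst c) (topsym n (snd c)) of
       Some (Op p (Push r \<gamma>)) \<Rightarrow>
         (if take (n - r + 1) a = topaddr n (r - 1) (snd c')
          then a[n - r := a ! (n - r) - 1] else a)
     | _ \<Rightarrow> a)"

primrec histN :: "nat \<Rightarrow> ('q, 'a, 'g) dpda \<Rightarrow> ('q, 'g) conf list \<Rightarrow> nat \<Rightarrow> nat list \<Rightarrow> nat list" where
  "histN n \<delta> R 0 a = a"
| "histN n \<delta> R (Suc i) a = histN n \<delta> R i (hist_step n \<delta> (R ! i) (R ! Suc i) a)"

definition hist0 :: "nat \<Rightarrow> ('q, 'a, 'g) dpda \<Rightarrow> ('q, 'g) conf list \<Rightarrow> nat list \<Rightarrow> nat list" where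
  "hist0 n \<delta> R a = histN n \<delta> R (length R - 1) a"

text \<open>hist(R, s^k) is the k-stack of R(0) at position prefix q, where s^k is the k-stack
  of R(|R|) at position prefix p: it contains hist(R,s^0) for all 0-stacks s^0 of s^k.\<close>
definition hist_is :: "nat \<Rightarrow> ('q, 'a, 'g) dpda \<Rightarrow> ('q, 'g) conf list \<Rightarrow> nat
                        \<Rightarrow> nat list \<Rightarrow> nat list \<Rightarrow> bool" where
  "hist_is n \<delta> R k p q \<longleftrightarrow>
     (\<forall>a \<in> pos n (snd (last R)). take (n - k) a = p \<longrightarrow>
        hist0 n \<delta> R a \<in> pos n (snd (hd R)) \<and> take (n - k) (hist0 n \<delta> R a) = q)"

text \<open>R is k-upper iff hist(R, top^k(R(|R|))) = top^k(R(0))\<close>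
definition upper :: "nat \<Rightarrow> ('q, 'a, 'g) dpda \<Rightarrow> nat \<Rightarrow> ('q, 'g) conf list \<Rightarrow> bool" where
  "upper n \<delta> k R \<longleftrightarrow> hist_is n \<delta> R k (topaddr n k (snd (last R))) (topaddr n k (snd (hd R)))"

end

theory Submission
  imports Defs
begin

lemma wf_SucE: "wf (Suc d) s \<Longrightarrow> \<exists>cs. s = L cs \<and> cs \<noteq> [] \<and> (\<forall>x\<in>set cs. wf d x)"
  by (cases s) auto

lemma pos_len: "a \<in> pos N s \<Longrightarrow> length a = N"
  by (induction N arbitrary: a s) auto

lemma tpath_snoc: "tpath (Suc m) s = tpath m s @ [length (children (descend m s))]"
  by (induction m arbitrary: s) auto

lemma take_tpath: "m \<le> m' \<Longrightarrow> take m (tpath m' s) = tpath m s"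
proof (induction m arbitrary: m' s)
  case 0 then show ?case by simp
next
  case (Suc m) then show ?case by (cases m') auto
qed

lemma tpath_pos: "wf N s \<Longrightarrow> tpath N s \<in> pos N s"
proof (induction N arbitrary: s)
  case 0 then show ?case by simp
next
  case (Suc N)
  from wf_SucE[OF Suc.prems] obtain cs where cs: "s = L cs" "cs \<noteq> []" "\<forall>x\<in>set cs. wf N x" by blast
  have "wf N (last cs)" using cs by simp
  then have "tpath N (last cs) \<in> pos N (cs ! (length cs - 1))" using Suc.IH cs by (simp add: last_conv_nth)
  moreover have "length cs = Suc (length cs - 1)" using cs by simp
  ultimately have "\<exists>i p. tpath (Suc N) s = Suc i # p \<and> i < length cs \<and> p \<in> pos N (cs ! i)"
    using cs by (intro exI[of _ "length cs - 1"] exI[of _ "tpath N (last cs)"]) auto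
  then show ?case using cs by simp
qed

lemma pos_top: "a \<in> pos N s \<Longrightarrow> m < N \<Longrightarrow> take m a = tpath m s \<Longrightarrow>
   1 \<le> a ! m \<and> a ! m \<le> length (children (descend m s))"
proof (induction m arbitrary: s a N)
  case 0 then show ?case by (cases N) auto
next
  case (Suc m)
  then obtain N' where N: "N = Suc N'" by (cases N) auto
  with Suc.prems obtain i p where ip: "a = Suc i # p" "i < length (children s)" "p \<in> pos N' (children s ! i)" by auto
  with Suc.prems have "Suc i = length (children s)" "take m p = tpath m (last (children s))" by auto
  moreover have "children s \<noteq> []" using ip by auto
  moreover have "i = length (children s) - 1" using \<open>Suc i = length (children s)\<close> by simp
  ultimately have "children s ! i = last (children s)"
    by (simp add: last_conv_nth)
  then show ?case using Suc.IH[of p N' "last (children s)"] ip Suc.prems N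
    \<open>take m p = _\<close> by auto
qed

lemma modtop_tpath: "wf N s \<Longrightarrow> m \<le> N \<Longrightarrow>
   tpath m (modtop m f s) = tpath m s \<and> descend m (modtop m f s) = f (descend m s)"
proof (induction m arbitrary: s N)
  case 0 then show ?case by simp
next
  case (Suc m)
  then obtain N' where N: "N = Suc N'" by (cases N) auto
  from wf_SucE Suc.prems N obtain cs where cs: "s = L cs" "cs \<noteq> []" "\<forall>x\<in>set cs. wf N' x" by blast
  have "wf N' (last cs)" using cs by simp
  then show ?case using Suc.IH[of N' "last cs"] Suc.prems N cs by auto
qed

lemma pos_modtop_shrink:
  assumes "a \<in> pos N (modtop m f s)" "wf N s" "m < N"
    and "\<And>t. pos (N - m) (f t) \<subseteq> pos (N - m) t"
  shows "a \<in> pos N s"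
  using assms
proof (induction m arbitrary: s N a)
  case 0 then show ?case by auto
next
  case (Suc m)
  then obtain N' where N: "N = Suc N'" by (cases N) auto
  from wf_SucE Suc.prems N obtain cs where cs: "s = L cs" "cs \<noteq> []" "\<forall>x\<in>set cs. wf N' x" by blast
  from Suc.prems N cs obtain i p where ip: "a = Suc i # p" "i < length cs"
    "p \<in> pos N' ((butlast cs @ [modtop m f (last cs)]) ! i)" by auto
  show ?case
  proof (cases "i < length cs - 1")
    case True
    then have "(butlast cs @ [modtop m f (last cs)]) ! i = cs ! i" by (simp add: nth_append nth_butlast)
    then show ?thesis using ip cs N by auto
  next
    case False
    then have i: "i = length cs - 1" using ip by auto
    then have "(butlast cs @ [modtop m f (last cs)]) ! i = modtop m f (last cs)" using cs by (simp add: nth_append)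
    then have "p \<in> pos N' (modtop m f (last cs))" using ip by simp
    then have "p \<in> pos N' (last cs)" apply (rule Suc.IH) using cs Suc.prems N by auto
    then show ?thesis using ip cs N i by (auto simp: last_conv_nth intro!: exI[of _ i])
  qed
qed

lemma pos_settop: "wf j x \<Longrightarrow> pos j (settop j \<gamma> x) = pos j x"
proof (induction j arbitrary: x)
  case 0 then show ?case by simp
next
  case (Suc j)
  from wf_SucE[OF Suc.prems] obtain cs where cs: "x = L cs" "cs \<noteq> []" "\<forall>x\<in>set cs. wf j x" by blast
  have e: "\<And>i. i < length cs \<Longrightarrow> pos j ((butlast cs @ [settop j \<gamma> (last cs)]) ! i) = pos j (cs ! i)"
  proof -
    fix i assume i: "i < length cs"
    show "pos j ((butlast cs @ [settop j \<gamma> (last cs)]) ! i) = pos j (cs ! i)"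
    proof (cases "i < length cs - 1")
      case True then show ?thesis by (simp add: nth_append nth_butlast)
    next
      case False
      then have "i = length cs - 1" using i by auto
      moreover have "wf j (last cs)" using cs by simp
      ultimately show ?thesis using Suc.IH cs by (simp add: nth_append last_conv_nth)
    qed
  qed
  show ?case using cs e by auto
qed

lemma pos_push:
  assumes "wf N s" "m < N" "j = N - m - 1"
    and "a \<in> pos N (modtop m (\<lambda>t. L (children t @ [settop j \<gamma> (last (children t))])) s)"
  shows "(if take (Suc m) a = tpath (Suc m) (modtop m (\<lambda>t. L (children t @ [settop j \<gamma> (last (children t))])) s)
          then a[m := a!m - 1] else a) \<in> pos N s"
  using assms
proof (induction m arbitrary: s N a)
  case 0
  then obtain N' where N: "N = Suc N'" by (cases N) auto
  from wf_SucE 0 N obtain cs where cs: "s = L cs" "cs \<noteq> []" "\<forall>x\<in>set cs. wf N' x" by blast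
  from 0 N cs obtain i p where ip: "a = Suc i # p" "i < Suc (length cs)"
    "p \<in> pos N' ((cs @ [settop j \<gamma> (last cs)]) ! i)" by auto
  have j: "j = N'" using 0 N by simp
  show ?case
  proof (cases "i = length cs")
    case True
    have "wf N' (last cs)" using cs by simp
    then have "p \<in> pos N' (last cs)" using ip True pos_settop[of N' "last cs" \<gamma>] j by simp
    then have "p \<in> pos N' (cs ! (length cs - 1))" using cs by (simp add: last_conv_nth)
    moreover have "length cs = Suc (length cs - 1)" using cs by simp
    ultimately have "\<exists>i' q. i # p = Suc i' # q \<and> i' < length cs \<and> q \<in> pos N' (cs ! i')"
      using True by (intro exI[of _ "length cs - 1"] exI[of _ p]) auto
    then show ?thesis using True ip cs N by simp
  next
    case False
    then have "i < length cs" using ip by simp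
    then show ?thesis using ip cs N False by (auto simp: nth_append)
  qed
next
  case (Suc m)
  then obtain N' where N: "N = Suc N'" by (cases N) auto
  from wf_SucE Suc.prems N obtain cs where cs: "s = L cs" "cs \<noteq> []" "\<forall>x\<in>set cs. wf N' x" by blast
  define g where "g = (\<lambda>t. L (children t @ [settop j \<gamma> (last (children t))]))"
  from Suc.prems N cs obtain i p where ip: "a = Suc i # p" "i < length cs"
    "p \<in> pos N' ((butlast cs @ [modtop m g (last cs)]) ! i)" by (auto simp: g_def)
  show ?case
  proof (cases "i < length cs - 1")
    case True
    then have "(butlast cs @ [modtop m g (last cs)]) ! i = cs ! i" by (simp add: nth_append nth_butlast)
    then show ?thesis using ip cs N True by (auto simp: g_def)
  next
    case False
    then have i: "i = length cs - 1" using ip by auto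
    then have "(butlast cs @ [modtop m g (last cs)]) ! i = modtop m g (last cs)" using cs by (simp add: nth_append)
    then have "p \<in> pos N' (modtop m g (last cs))" using ip by simp
    then have IH: "(if take (Suc m) p = tpath (Suc m) (modtop m g (last cs)) then p[m := p!m - 1] else p) \<in> pos N' (last cs)"
      unfolding g_def apply (intro Suc.IH) using cs Suc.prems N by auto
    have li: "length cs = Suc i" using i cs by simp
    have lc: "last cs = cs ! i" using i cs by (simp add: last_conv_nth)
    show ?thesis using IH li lc ip cs N unfolding g_def[symmetric]
      by (auto simp: g_def)
  qed
qed

lemma pos_pop: "pos (Suc d) (L (butlast (children t))) \<subseteq> pos (Suc d) t"
  by (auto simp: nth_butlast)

lemma step_pos:
  assumes "succ n \<delta> c c'" "wf n (snd c)" "b \<in> pos n (snd c')"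
  shows "hist_step n \<delta> c c' b \<in> pos n (snd c)"
proof (cases "\<delta> (fst c) (topsym n (snd c))")
  case None then show ?thesis using assms by (simp add: succ_def)
next
  case (Some t)
  show ?thesis
  proof (cases t)
    case (Read f) then show ?thesis using assms Some by (simp add: succ_def hist_step_def)
  next
    case (Op p opr)
    show ?thesis
    proof (cases opr)
      case (Pop k)
      have ap: "apply_op n (Pop k) (snd c) = Some (snd c')" using assms Some Op Pop by (simp add: succ_def)
      then have k: "1 \<le> k" "k \<le> n" and s': "snd c' = modtop (n - k) (\<lambda>t. L (butlast (children t))) (snd c)"
        by (auto split: if_splits)
      have hs: "hist_step n \<delta> c c' b = b" using Some Op Pop by (simp add: hist_step_def)
      have e: "n - (n - k) = Suc (k - 1)" using k by simp
      have "b \<in> pos n (snd c)"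
        apply (rule pos_modtop_shrink[where m="n-k" and f="\<lambda>t. L (butlast (children t))"])
        using assms(2,3) s' k apply auto[3]
        using pos_pop[of "k - 1"] e by simp
      then show ?thesis using hs by simp
    next
      case (Push r \<gamma>)
      have ap: "apply_op n (Push r \<gamma>) (snd c) = Some (snd c')" using assms Some Op Push by (simp add: succ_def)
      then have r: "1 \<le> r" "r \<le> n" and s': "snd c' = modtop (n - r)
              (\<lambda>t. L (children t @ [settop (r - 1) \<gamma> (last (children t))])) (snd c)"
        by (auto split: if_splits)
      have e1: "n - r + 1 = Suc (n - r)" "n - (r - 1) = Suc (n - r)" using r by auto
      have hs: "hist_step n \<delta> c c' b = (if take (Suc (n - r)) b = tpath (Suc (n - r)) (snd c')
          then b[n - r := b ! (n - r) - 1] else b)"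
        using Some Op Push e1 by (simp add: hist_step_def topaddr_def)
      show ?thesis unfolding hs s'
        apply (rule pos_push)
        using assms(2,3) s' r by auto
    qed
  qed
qed

lemma hist_step_len: "length (hist_step n \<delta> c c' a) = length a"
  by (auto simp: hist_step_def split: option.split tr.split op.split)

lemma histN_len: "length (histN n \<delta> R i a) = length a"
  by (induction i arbitrary: a) (auto simp: hist_step_len)

lemma upd_dec_le: "a[i := a ! i - (1::nat)] ! j \<le> a ! j"
  by (cases "i = j"; cases "i < length a") (auto simp: nth_list_update list_update_beyond)

lemma hist_step_le: "hist_step n \<delta> c c' a ! j \<le> a ! j"
  using upd_dec_le[simplified]
  by (auto simp: hist_step_def upd_dec_le split: option.split tr.split op.split)

lemma histN_le: "histN n \<delta> R i a ! j \<le> a ! j"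
proof (induction i arbitrary: a)
  case 0 then show ?case by simp
next
  case (Suc i) then show ?case using hist_step_le le_trans by (simp, blast)
qed

lemma histN_drop: "i \<le> length R \<Longrightarrow> histN n \<delta> R (i + m) a = histN n \<delta> R i (histN n \<delta> (drop i R) m a)"
  by (induction m arbitrary: a) (auto simp: nth_drop)

lemma take_upd: "take m (a[i:=v]) = (if i < m then (take m a)[i:=v] else take m a)"
  by (simp add: take_update_swap list_update_beyond)

lemma hist_step_coh: "take m a = take m b \<Longrightarrow>
   take m (hist_step n \<delta> c c' a) = take m (hist_step n \<delta> c c' b)"
proof -
  assume h: "take m a = take m b"
  have key: "\<And>i X. take m (if take (i + 1) a = X then a[i := a ! i - 1] else a) =
              take m (if take (i + 1) b = X then b[i := b ! i - 1] else b)"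
  proof -
    fix i X
    show "take m (if take (i + 1) a = X then a[i := a ! i - 1] else a) =
              take m (if take (i + 1) b = X then b[i := b ! i - 1] else b)"
    proof (cases "i < m")
      case True
      have t1: "take (i+1) a = take (i+1) (take m a)" "take (i+1) b = take (i+1) (take m b)"
        using True by (simp_all add: min_def)
      have "take (i+1) a = take (i+1) b" using h t1 by simp
      moreover have "a ! i = take m a ! i" "b ! i = take m b ! i" using True by simp_all
      then have "a ! i = b ! i" using h by simp
      ultimately show ?thesis using h True by (simp add: take_upd)
    next
      case False then show ?thesis using h by (simp add: take_upd)
    qed
  qed
  show ?thesis
    unfolding hist_step_def
    apply (cases "\<delta> (fst c) (topsym n (snd c))")
     apply (simp add: h)
    subgoal for t
      apply (cases t)
       apply (simp add: h)
      subgoal for p opr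
        apply (cases opr)
         apply (simp add: h)
        subgoal for r g using key[of "n - r"] by (simp add: topaddr_def)
        done
      done
    done
qed

lemma histN_coh: "take m a = take m b \<Longrightarrow> take m (histN n \<delta> R i a) = take m (histN n \<delta> R i b)"
proof (induction i arbitrary: a b)
  case 0 then show ?case by simp
next
  case (Suc i)
  have "take m (hist_step n \<delta> (R ! i) (R ! Suc i) a) = take m (hist_step n \<delta> (R ! i) (R ! Suc i) b)"
    by (rule hist_step_coh[OF Suc.prems])
  from Suc.IH[OF this] show ?case by simp
qed

lemma histN_run_pos:
  assumes "\<forall>c\<in>set xs. wf n (snd c)" "\<forall>i. 0 < i \<and> i < length xs \<longrightarrow> succ n \<delta> (xs ! (i - 1)) (xs ! i)"
  shows "i < length xs \<Longrightarrow> b \<in> pos n (snd (xs ! i)) \<Longrightarrow> histN n \<delta> xs i b \<in> pos n (snd (xs ! 0))"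
proof (induction i arbitrary: b)
  case 0 then show ?case by simp
next
  case (Suc i)
  have "succ n \<delta> (xs ! i) (xs ! Suc i)" using assms(2) Suc.prems by (metis diff_Suc_1 zero_less_Suc)
  moreover have "wf n (snd (xs ! i))" using assms(1) Suc.prems by simp
  ultimately have "hist_step n \<delta> (xs ! i) (xs ! Suc i) b \<in> pos n (snd (xs ! i))"
    using step_pos Suc.prems by blast
  then show ?case using Suc.IH Suc.prems by simp
qed

lemma is_run_drop: "is_run n \<delta> R \<Longrightarrow> i < length R \<Longrightarrow> is_run n \<delta> (drop i R)"
  unfolding is_run_def
proof (intro conjI allI impI)
  assume a: "R \<noteq> [] \<and> (\<forall>c\<in>set R. wf n (snd c)) \<and> (\<forall>i. 0 < i \<and> i < length R \<longrightarrow> succ n \<delta> (R ! (i - 1)) (R ! i))"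
    and i: "i < length R"
  show "drop i R \<noteq> []" using i by simp
  show "\<forall>c\<in>set (drop i R). wf n (snd c)" using a by (auto dest: in_set_dropD)
  fix j assume j: "0 < j \<and> j < length (drop i R)"
  then have "succ n \<delta> (R ! (i + j - 1)) (R ! (i + j))" using a by auto
  moreover have "i + j - 1 = i + (j - 1)" using j by simp
  ultimately show "succ n \<delta> (drop i R ! (j - 1)) (drop i R ! j)" using i by (simp add: nth_drop)
qed

lemma upper_iff: "upper n \<delta> k' R \<longleftrightarrow> (\<forall>a\<in>pos n (snd (last R)). take (n-k') a = tpath (n-k') (snd (last R)) \<longrightarrow>
    hist0 n \<delta> R a \<in> pos n (snd (hd R)) \<and> take (n-k') (hist0 n \<delta> R a) = tpath (n-k') (snd (hd R)))"
  by (simp add: upper_def hist_is_def topaddr_def)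

lemma take_Suc_upd: "m < length x \<Longrightarrow> take (Suc m) (x[m := v]) = take m x @ [v]"
  by (simp add: take_Suc_conv_app_nth take_update_swap list_update_append)

lemma step_T:
  assumes "succ n \<delta> c c'" "wf n (snd c)" "1 \<le> k" "k \<le> n" "m = n - k" "length x = n"
    and nT: "\<not> (take (Suc m) (hist_step n \<delta> c c' x) = tpath (Suc m) (snd c))"
  shows "hist_step n \<delta> c c' x ! m = x ! m"
proof (cases "\<delta> (fst c) (topsym n (snd c))")
  case None then show ?thesis using assms by (simp add: succ_def)
next
  case (Some t)
  show ?thesis
  proof (cases t)
    case (Read f) then show ?thesis using Some by (simp add: hist_step_def)
  next
    case (Op p opr)
    show ?thesis
    proof (cases opr)
      case (Pop k') then show ?thesis using Some Op by (simp add: hist_step_def)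
    next
      case (Push r \<gamma>)
      define g where "g = (\<lambda>t. L (children t @ [settop (r - 1) \<gamma> (last (children t))]))"
      have ap: "apply_op n (Push r \<gamma>) (snd c) = Some (snd c')" using assms Some Op Push by (simp add: succ_def)
      then have r: "1 \<le> r" "r \<le> n" and s': "snd c' = modtop (n - r) g (snd c)"
        by (auto simp: g_def split: if_splits)
      have e1: "n - r + 1 = Suc (n - r)" "n - (r - 1) = Suc (n - r)" using r by auto
      have hs: "hist_step n \<delta> c c' x = (if take (Suc (n - r)) x = tpath (Suc (n - r)) (snd c')
          then x[n - r := x ! (n - r) - 1] else x)"
        using Some Op Push e1 by (simp add: hist_step_def topaddr_def)
      show ?thesis
      proof (cases "r = k")
        case False
        then have "n - r \<noteq> m" using r assms by auto
        then show ?thesis using hs by auto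
      next
        case True
        show ?thesis
        proof (rule ccontr)
          assume ne: "hist_step n \<delta> c c' x ! m \<noteq> x ! m"
          then have cond: "take (Suc m) x = tpath (Suc m) (snd c')" and hx: "hist_step n \<delta> c c' x = x[m := x ! m - 1]"
            using hs True assms by (auto split: if_splits)
          have ml: "m < length x" using assms by auto
          have mt: "tpath m (snd c') = tpath m (snd c)" "descend m (snd c') = g (descend m (snd c))"
            using modtop_tpath[OF assms(2), of m g] s' True assms by auto
          have "take m x @ [x ! m] = tpath m (snd c') @ [length (children (descend m (snd c')))]"
            using cond ml by (simp add: take_Suc_conv_app_nth tpath_snoc del: tpath.simps(2))
          then have "take m x = tpath m (snd c)" "x ! m = length (children (descend m (snd c))) + 1"
            using mt by (auto simp: g_def)
          then have "take (Suc m) (hist_step n \<delta> c c' x) = tpath (Suc m) (snd c)"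
            using hx ml by (simp add: take_Suc_upd tpath_snoc del: tpath.simps(2))
          then show False using nT by simp
        qed
      qed
    qed
  qed
qed

lemma histN_one: "histN n \<delta> xs (Suc 0) b = hist_step n \<delta> (xs ! 0) (xs ! 1) b"
  by simp

lemma h_step:
  assumes "i < P" "P = length R - 1"
  shows "histN n \<delta> (drop i R) (P - i) a = hist_step n \<delta> (R ! i) (R ! Suc i) (histN n \<delta> (drop (Suc i) R) (P - Suc i) a)"
proof -
  have "P - i = 1 + (P - Suc i)" using assms by simp
  then have "histN n \<delta> (drop i R) (P - i) a = histN n \<delta> (drop i R) 1 (histN n \<delta> (drop 1 (drop i R)) (P - Suc i) a)"
    using histN_drop[of 1 "drop i R" n \<delta> "P - Suc i" a] assms by simp
  then show ?thesis using assms by (simp add: nth_drop)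
qed

theorem mainTheorem5:
  fixes n k :: nat
    and \<delta> :: "('q::finite, 'a::finite, 'g::finite) dpda"
    and R :: "('q, 'g) conf list"
  assumes "is_dpda n \<delta>"
    and "1 \<le> k" and "k \<le> n"
    and "is_run n \<delta> R"
    and "upper n \<delta> k R"
  shows "upper n \<delta> (k - 1) R \<longleftrightarrow>
           (\<forall>i \<le> length R - 1. upper n \<delta> k (drop i R) \<longrightarrow>
              topk_len n k (snd (R ! 0)) \<le> topk_len n k (snd (R ! i)))"
proof -
  define m where "m = n - k"
  define P where "P = length R - 1"
  have Rne: "R \<noteq> []" and wfR: "\<forall>c\<in>set R. wf n (snd c)"
    and succR: "\<forall>i. 0 < i \<and> i < length R \<longrightarrow> succ n \<delta> (R ! (i - 1)) (R ! i)"
    using assms(4) by (auto simp: is_run_def)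
  have mn: "m < n" using assms m_def by auto
  have e1: "n - (k - 1) = Suc m" using assms m_def by auto
  have lastR: "last R = R ! P" using Rne by (simp add: P_def last_conv_nth)
  have hdR: "hd R = R ! 0" using Rne by (simp add: hd_conv_nth)
  have PR: "P < length R" using Rne P_def by simp
  have tkl: "\<And>s. topk_len n k s = length (children (descend m s))"
    by (simp add: topk_len_def topk_def m_def)
  note tkl[simp]
  have hist0_drop: "\<And>i a. i \<le> P \<Longrightarrow> hist0 n \<delta> (drop i R) a = histN n \<delta> (drop i R) (P - i) a"
    by (simp add: hist0_def P_def)
  have hist0_R: "\<And>i a. i \<le> P \<Longrightarrow> hist0 n \<delta> R a = histN n \<delta> R i (histN n \<delta> (drop i R) (P - i) a)"
  proof -
    fix i a assume "i \<le> P"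
    then have "histN n \<delta> R (i + (P - i)) a = histN n \<delta> R i (histN n \<delta> (drop i R) (P - i) a)"
      using PR by (intro histN_drop) auto
    moreover have "i + (P - i) = P" using \<open>i \<le> P\<close> by simp
    ultimately show "hist0 n \<delta> R a = histN n \<delta> R i (histN n \<delta> (drop i R) (P - i) a)"
      by (simp add: hist0_def P_def)
  qed
  have ld: "\<And>i. i \<le> P \<Longrightarrow> last (drop i R) = R ! P \<and> hd (drop i R) = R ! i"
    using PR lastR by (auto simp: hd_drop_conv_nth)
  have up_k: "\<And>i. i \<le> P \<Longrightarrow> upper n \<delta> k (drop i R) \<longleftrightarrow> (\<forall>a\<in>pos n (snd (R ! P)). take m a = tpath m (snd (R ! P)) \<longrightarrow>
    histN n \<delta> (drop i R) (P - i) a \<in> pos n (snd (R ! i)) \<and> take m (histN n \<delta> (drop i R) (P - i) a) = tpath m (snd (R ! i)))"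
    using ld hist0_drop by (simp add: upper_iff m_def)
  have up_k1: "upper n \<delta> (k - 1) R \<longleftrightarrow> (\<forall>a\<in>pos n (snd (R ! P)). take (Suc m) a = tpath (Suc m) (snd (R ! P)) \<longrightarrow>
    hist0 n \<delta> R a \<in> pos n (snd (R ! 0)) \<and> take (Suc m) (hist0 n \<delta> R a) = tpath (Suc m) (snd (R ! 0)))"
    using lastR hdR e1 by (simp add: upper_iff)
  have upR: "upper n \<delta> k (drop 0 R)" using assms(5) by simp
  have wfP: "wf n (snd (R ! P))" using wfR PR by simp
  show ?thesis
  proof
    assume u1: "upper n \<delta> (k - 1) R"
    show "\<forall>i \<le> length R - 1. upper n \<delta> k (drop i R) \<longrightarrow> topk_len n k (snd (R ! 0)) \<le> topk_len n k (snd (R ! i))"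
    proof (intro allI impI)
      fix i assume iP: "i \<le> length R - 1" and ui: "upper n \<delta> k (drop i R)"
      have iP': "i \<le> P" using iP P_def by simp
      define a where "a = tpath n (snd (R ! P))"
      have apos: "a \<in> pos n (snd (R ! P))" using tpath_pos[OF wfP] a_def by simp
      have at1: "take (Suc m) a = tpath (Suc m) (snd (R ! P))" using a_def mn by (simp add: take_tpath)
      have at0: "take m a = tpath m (snd (R ! P))" using a_def mn by (simp add: take_tpath)
      define hi where "hi = histN n \<delta> (drop i R) (P - i) a"
      have hi: "hi \<in> pos n (snd (R ! i))" "take m hi = tpath m (snd (R ! i))"
        using ui up_k[OF iP'] apos at0 hi_def by auto
      have hi_le: "hi ! m \<le> topk_len n k (snd (R ! i))" using pos_top[OF hi(1) mn hi(2)] tkl by simp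
      have h0: "take (Suc m) (hist0 n \<delta> R a) = tpath (Suc m) (snd (R ! 0))"
        using u1 up_k1 apos at1 by blast
      have "length (hist0 n \<delta> R a) = n" using pos_len[OF apos] by (simp add: hist0_def histN_len)
      then have "hist0 n \<delta> R a ! m = topk_len n k (snd (R ! 0))"
        using h0 mn tkl by (simp add: take_Suc_conv_app_nth tpath_snoc del: tpath.simps(2))
      moreover have "hist0 n \<delta> R a ! m \<le> hi ! m" unfolding hist0_R[OF iP'] hi_def by (rule histN_le)
      ultimately show "topk_len n k (snd (R ! 0)) \<le> topk_len n k (snd (R ! i))" using hi_le by simp
    qed
  next
    assume H: "\<forall>i \<le> length R - 1. upper n \<delta> k (drop i R) \<longrightarrow> topk_len n k (snd (R ! 0)) \<le> topk_len n k (snd (R ! i))"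
    show "upper n \<delta> (k - 1) R"
      unfolding up_k1
    proof (intro ballI impI)
      fix a assume apos: "a \<in> pos n (snd (R ! P))" and at1: "take (Suc m) a = tpath (Suc m) (snd (R ! P))"
      have at0: "take m a = tpath m (snd (R ! P))"
      proof -
        have "take m a = take m (take (Suc m) a)" by simp
        then show ?thesis using at1 by (simp add: take_tpath del: tpath.simps(2))
      qed
      define h where "h i = histN n \<delta> (drop i R) (P - i) a" for i
      have hlen: "\<And>i. length (h i) = n" using pos_len[OF apos] by (simp add: h_def histN_len)
      define T where "T i \<longleftrightarrow> take (Suc m) (h i) = tpath (Suc m) (snd (R ! i))" for i
      have TP: "T P" using at1 by (simp add: T_def h_def)
      define j where "j = (LEAST i. T i)"
      have Tj: "T j" using TP unfolding j_def by (rule LeastI)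
      have jP: "j \<le> P" using TP j_def by (simp add: Least_le)
      have nT: "\<And>i. i < j \<Longrightarrow> \<not> T i" unfolding j_def by (rule not_less_Least)
      have hs: "\<And>i. i < P \<Longrightarrow> h i = hist_step n \<delta> (R ! i) (R ! Suc i) (h (Suc i))"
        unfolding h_def by (rule h_step[OF _ P_def])
      have same: "\<And>d. d \<le> j \<Longrightarrow> h (j - d) ! m = h j ! m"
      proof -
        fix d show "d \<le> j \<Longrightarrow> h (j - d) ! m = h j ! m"
        proof (induction d)
          case 0 then show ?case by simp
        next
          case (Suc d)
          define i where "i = j - Suc d"
          have ij: "i < j" "Suc i = j - d" using Suc.prems i_def by auto
          have iP: "i < P" using ij jP by simp
          have "0 < Suc i \<and> Suc i < length R" using iP PR by simp
          then have sc: "succ n \<delta> (R ! i) (R ! Suc i)" using succR by fastforce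
          have wi: "wf n (snd (R ! i))" using wfR iP PR by simp
          have "\<not> T i" using nT ij by simp
          then have "\<not> take (Suc m) (hist_step n \<delta> (R ! i) (R ! Suc i) (h (Suc i))) = tpath (Suc m) (snd (R ! i))"
            using hs[OF iP] by (simp add: T_def)
          then have "hist_step n \<delta> (R ! i) (R ! Suc i) (h (Suc i)) ! m = h (Suc i) ! m"
            using step_T[OF sc wi assms(2) assms(3) m_def hlen] by blast
          then have "h i ! m = h (Suc i) ! m" using hs[OF iP] by simp
          then show ?case using Suc ij i_def by simp
        qed
      qed
      have h0j: "h 0 ! m = h j ! m" using same[of j] by simp
      have hjm: "h j ! m = topk_len n k (snd (R ! j))" and hjt: "take m (h j) = tpath m (snd (R ! j))"
        using Tj hlen[of j] mn tkl by (simp_all add: T_def take_Suc_conv_app_nth tpath_snoc del: tpath.simps(2))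
      have uj: "upper n \<delta> k (drop j R)"
        unfolding up_k[OF jP]
      proof (intro ballI impI conjI)
        fix b assume bpos: "b \<in> pos n (snd (R ! P))" and bt: "take m b = tpath m (snd (R ! P))"
        have rd: "is_run n \<delta> (drop j R)" using is_run_drop[OF assms(4)] jP PR by simp
        then have "histN n \<delta> (drop j R) (P - j) b \<in> pos n (snd (drop j R ! 0))"
          apply (intro histN_run_pos)
          using bpos jP PR by (auto simp: is_run_def nth_drop)
        then show "histN n \<delta> (drop j R) (P - j) b \<in> pos n (snd (R ! j))" using jP PR by (simp add: nth_drop)
        have "take m (histN n \<delta> (drop j R) (P - j) b) = take m (h j)"
          unfolding h_def by (rule histN_coh) (simp add: bt at0)
        then show "take m (histN n \<delta> (drop j R) (P - j) b) = tpath m (snd (R ! j))" using hjt by simp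
      qed
      have "topk_len n k (snd (R ! 0)) \<le> h 0 ! m" using H uj jP P_def h0j hjm by auto
      moreover have h0: "h 0 \<in> pos n (snd (R ! 0))" "take m (h 0) = tpath m (snd (R ! 0))"
      proof -
        have "upper n \<delta> k (drop 0 R)" by (rule upR)
        then have "\<forall>a\<in>pos n (snd (R ! P)). take m a = tpath m (snd (R ! P)) \<longrightarrow>
          histN n \<delta> (drop 0 R) (P - 0) a \<in> pos n (snd (R ! 0)) \<and> take m (histN n \<delta> (drop 0 R) (P - 0) a) = tpath m (snd (R ! 0))"
          using up_k[of 0] by simp
        then show "h 0 \<in> pos n (snd (R ! 0))" "take m (h 0) = tpath m (snd (R ! 0))"
          using apos at0 unfolding h_def by blast+
      qed
      moreover have "h 0 ! m \<le> topk_len n k (snd (R ! 0))"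
        using pos_top[OF h0(1) mn h0(2)] tkl by simp
      ultimately have "h 0 ! m = topk_len n k (snd (R ! 0))" by simp
      then have "take (Suc m) (h 0) = tpath (Suc m) (snd (R ! 0))"
        using h0(2) hlen[of 0] mn tkl by (simp add: take_Suc_conv_app_nth tpath_snoc del: tpath.simps(2))
      moreover have "hist0 n \<delta> R a = h 0" using hist0_R[of 0 a] h_def by simp
      ultimately show "hist0 n \<delta> R a \<in> pos n (snd (R ! 0)) \<and> take (Suc m) (hist0 n \<delta> R a) = tpath (Suc m) (snd (R ! 0))"
        using h0 by simp
    qed
  qed
qed

end
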